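(* Fix an integer precision $p\ge 1$ and let $\epsilon = 2^{-p+1}$. Suppose GDS is $k$-competitive in the following sense: for every request sequence $\tau$ in which every pair has a positive integer cost-to-size ratio, and for every way of breaking ties among pairs of smallest $H$-value, $\mathrm{GDS}(\tau)\le k\cdot \mathrm{OPT}(\tau)$. Then for every request sequence $\sigma$ in which every pair has a positive integer cost-to-size ratio, $\mathrm{CAMP}(\sigma) \le (1+\epsilon)\,k\cdot \mathrm{OPT}(\sigma)$.
   Context: Caching model: a memory of fixed capacity; each key-value pair $q$ has size $\operatorname{size}(q)>0$ and cost $\operatorname{cost}(q)>0$, each pair fits in memory by itself. Requests arrive in sequence; if the requested pair is not in memory (a miss), its cost is paid and it is brought into memory, evicting other pairs as needed so the total size of pairs in memory never exceeds capacity. For an algorithm $A$ and sequence $\sigma$, $A(\sigma)$ is the total cost paid on misses; $\mathrm{OPT}(\sigma)$ is the minimum total cost over all (offline) eviction strategies that know $\sigma$ in advance. GDS: keeps a global $L$ (initially $0$) and $H(q)$ for pairs $q$ in memory. On a request for $q$: if $q$ is in memory, $L\leftarrow\min_{r\in M\setminus\{q\}}H(r)$; otherwise, while there is not enough room for $q$, evict a pair with smallest $H$ and set $L\leftarrow \min_{r\in M}H(r)$, then bring $q$ in; finally $H(q)\leftarrow L+\operatorname{cost}(q)/\operatorname{size}(q)$. Rounding to precision $p$: for a positive integer $x$ whose highest nonzero bit is in position $b$ (positions numbered from $1$ at the lowest-order bit), $\bar x = x$ if $b\le p$, and otherwise $\bar x$ is $x$ with its $b-p$ lowest-order bits set to zero.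 CAMP with precision $p$: on sequence $\sigma$, it makes exactly the eviction decisions GDS makes (with ties among smallest $H$ broken by least-recent request) when each pair's cost-to-size ratio $x=\operatorname{cost}(q)/\operatorname{size}(q)$ is replaced by its rounded value $\bar x$; but on each miss for $q$ it pays the true cost $\operatorname{cost}(q)$. Equivalently, letting $\bar\sigma$ be $\sigma$ with each pair's cost replaced by $\operatorname{size}(q)\cdot\bar x$, CAMP's decisions on $\sigma$ coincide with those of GDS on $\bar\sigma$. *)

theory Defs
  imports Complex_Main
begin

text \<open>Offline optimum: a feasible schedule is a list of memory contents Ms with
Ms!i the memory just before the i-th request; memory starts empty, after serving
request i the requested pair is in memory, the new memory only contains pairs
of the old memory plus the requested one (no prefetching), and the capacity
is respected.\<close>

definition feasible_schedule ::
  "('q \<Rightarrow> real) \<Rightarrow> real \<Rightarrow> 'q list \<Rightarrow> 'q set list \<Rightarrow> bool" where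
  "feasible_schedule sz C \<sigma> Ms \<longleftrightarrow>
     length Ms = Suc (length \<sigma>) \<and> Ms ! 0 = {} \<and>
     (\<forall>i < length \<sigma>. \<sigma> ! i \<in> Ms ! Suc i \<and>
                       Ms ! Suc i \<subseteq> insert (\<sigma> ! i) (Ms ! i) \<and>
                       sum sz (Ms ! Suc i) \<le> C)"

definition schedule_cost ::
  "('q \<Rightarrow> real) \<Rightarrow> 'q list \<Rightarrow> 'q set list \<Rightarrow> real" where
  "schedule_cost c \<sigma> Ms = (\<Sum>i < length \<sigma>. if \<sigma> ! i \<in> Ms ! i then 0 else c (\<sigma> ! i))"

definition OPT ::
  "('q \<Rightarrow> real) \<Rightarrow> real \<Rightarrow> ('q \<Rightarrow> real) \<Rightarrow> 'q list \<Rightarrow> real" where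
  "OPT sz C c \<sigma> = Inf {schedule_cost c \<sigma> Ms | Ms. feasible_schedule sz C \<sigma> Ms}"

text \<open>A tie-breaking rule 'choose' gets the history of earlier requests, the
current memory, the current H and a candidate r; it says whether r may be evicted.
Every admissible choice must be a pair in memory of smallest H.\<close>

definition min_H :: "'q set \<Rightarrow> ('q \<Rightarrow> real) \<Rightarrow> 'q \<Rightarrow> bool" where
  "min_H M H r \<longleftrightarrow> r \<in> M \<and> (\<forall>s\<in>M. H r \<le> H s)"

definition any_tie :: "'q list \<Rightarrow> 'q set \<Rightarrow> ('q \<Rightarrow> real) \<Rightarrow> 'q \<Rightarrow> bool" where
  "any_tie hist M H r \<longleftrightarrow> min_H M H r"

definition last_req :: "'q list \<Rightarrow> 'q \<Rightarrow> nat" where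
  "last_req hist r = Max {i. i < length hist \<and> hist ! i = r}"

definition lru_tie :: "'q list \<Rightarrow> 'q set \<Rightarrow> ('q \<Rightarrow> real) \<Rightarrow> 'q \<Rightarrow> bool" where
  "lru_tie hist M H r \<longleftrightarrow> min_H M H r \<and>
     (\<forall>s\<in>M. H s = H r \<longrightarrow> last_req hist r \<le> last_req hist s)"

text \<open>Eviction loop on a miss for q: while there is not enough room for q, evict a
chosen pair r of smallest H and set L to H r (= the minimum of H over the memory
at the moment of eviction).\<close>
inductive evict_loop ::
  "('q \<Rightarrow> real) \<Rightarrow> real \<Rightarrow> ('q set \<Rightarrow> ('q \<Rightarrow> real) \<Rightarrow> 'q \<Rightarrow> bool) \<Rightarrow> 'q \<Rightarrow>
   ('q \<Rightarrow> real) \<Rightarrow> 'q set \<Rightarrow> real \<Rightarrow> 'q set \<Rightarrow> real \<Rightarrow> bool"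
  for sz C ch q H where
  stop: "sum sz M + sz q \<le> C \<Longrightarrow> evict_loop sz C ch q H M L M L"
| evict: "\<lbrakk> sum sz M + sz q > C; ch M H r;
           evict_loop sz C ch q H (M - {r}) (H r) M' L' \<rbrakk>
         \<Longrightarrow> evict_loop sz C ch q H M L M' L'"

text \<open>One request step of GDS with ratio function rho (used for H) and cost
function c (paid on misses). On a hit, L becomes the minimum of H over the other
pairs in memory (unchanged if there are none).\<close>
inductive gds_step ::
  "('q \<Rightarrow> real) \<Rightarrow> real \<Rightarrow> ('q \<Rightarrow> real) \<Rightarrow> ('q \<Rightarrow> real) \<Rightarrow>
   ('q set \<Rightarrow> ('q \<Rightarrow> real) \<Rightarrow> 'q \<Rightarrow> bool) \<Rightarrow> 'q \<Rightarrow>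
   'q set \<Rightarrow> ('q \<Rightarrow> real) \<Rightarrow> real \<Rightarrow> 'q set \<Rightarrow> ('q \<Rightarrow> real) \<Rightarrow> real \<Rightarrow> real \<Rightarrow> bool"
  for sz C rho c ch q where
  hit: "\<lbrakk> q \<in> M;
          L' = (if M - {q} = {} then L else Min (H ` (M - {q}))) \<rbrakk>
        \<Longrightarrow> gds_step sz C rho c ch q M H L M (H(q := L' + rho q)) L' 0"
| miss: "\<lbrakk> q \<notin> M; evict_loop sz C ch q H M L M' L' \<rbrakk>
        \<Longrightarrow> gds_step sz C rho c ch q M H L (insert q M') (H(q := L' + rho q)) L' (c q)"

text \<open>Execution on a prefix of the request sequence: gds_exec ... hist M H L total
means that after serving the requests hist (starting from empty memory, L = 0)
the state is (M, H, L) and the total paid cost is total.\<close>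
inductive gds_exec ::
  "('q \<Rightarrow> real) \<Rightarrow> real \<Rightarrow> ('q \<Rightarrow> real) \<Rightarrow> ('q \<Rightarrow> real) \<Rightarrow>
   ('q list \<Rightarrow> 'q set \<Rightarrow> ('q \<Rightarrow> real) \<Rightarrow> 'q \<Rightarrow> bool) \<Rightarrow>
   'q list \<Rightarrow> 'q set \<Rightarrow> ('q \<Rightarrow> real) \<Rightarrow> real \<Rightarrow> real \<Rightarrow> bool"
  for sz C rho c ch where
  init: "gds_exec sz C rho c ch [] {} (\<lambda>_. 0) 0 0"
| step: "\<lbrakk> gds_exec sz C rho c ch hist M H L tot;
           gds_step sz C rho c (ch hist) q M H L M' H' L' paid \<rbrakk>
         \<Longrightarrow> gds_exec sz C rho c ch (hist @ [q]) M' H' L' (tot + paid)"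

definition GDS_run_cost ::
  "('q \<Rightarrow> real) \<Rightarrow> real \<Rightarrow> ('q \<Rightarrow> real) \<Rightarrow>
   ('q list \<Rightarrow> 'q set \<Rightarrow> ('q \<Rightarrow> real) \<Rightarrow> 'q \<Rightarrow> bool) \<Rightarrow> 'q list \<Rightarrow> real \<Rightarrow> bool" where
  "GDS_run_cost sz C c ch \<sigma> tot \<longleftrightarrow>
     (\<exists>M H L. gds_exec sz C (\<lambda>q. c q / sz q) c ch \<sigma> M H L tot)"

text \<open>Position of the highest nonzero bit of a positive integer x (lowest bit = 1):
the least b with x < 2^b.\<close>
definition top_bit :: "nat \<Rightarrow> nat" where
  "top_bit x = (LEAST b. x < 2 ^ b)"

definition round_prec :: "nat \<Rightarrow> nat \<Rightarrow> nat" where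
  "round_prec p x = (if top_bit x \<le> p then x
                     else (x div 2 ^ (top_bit x - p)) * 2 ^ (top_bit x - p))"

definition int_ratio :: "('q \<Rightarrow> real) \<Rightarrow> ('q \<Rightarrow> real) \<Rightarrow> 'q \<Rightarrow> bool" where
  "int_ratio sz c q \<longleftrightarrow> (\<exists>n::nat. n > 0 \<and> c q / sz q = real n)"

text \<open>Rounded ratio (meaningful when int_ratio holds).\<close>
definition rounded_ratio :: "nat \<Rightarrow> ('q \<Rightarrow> real) \<Rightarrow> ('q \<Rightarrow> real) \<Rightarrow> 'q \<Rightarrow> real" where
  "rounded_ratio p sz c q = real (round_prec p (nat \<lfloor>c q / sz q\<rfloor>))"

definition CAMP_run_cost ::
  "nat \<Rightarrow> ('q \<Rightarrow> real) \<Rightarrow> real \<Rightarrow> ('q \<Rightarrow> real) \<Rightarrow> 'q list \<Rightarrow> real \<Rightarrow> bool" where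
  "CAMP_run_cost p sz C c \<sigma> tot \<longleftrightarrow>
     (\<exists>M H L. gds_exec sz C (rounded_ratio p sz c) c lru_tie \<sigma> M H L tot)"

end

theory Submission
  imports Defs
begin

lemma step_transfer:
  assumes "gds_step sz C rhoA cA ch q M H L M' H' L' paid" "rhoA q = rhoB q"
  shows "\<exists>paid2. gds_step sz C rhoB cB ch q M H L M' H' L' paid2 \<and>
    ((paid = 0 \<and> paid2 = 0 \<and> q \<in> M) \<or> (paid = cA q \<and> paid2 = cB q \<and> q \<notin> M))"
  using assms
proof (cases rule: gds_step.cases)
  case (hit)
  then show ?thesis using assms(2) by (metis gds_step.hit)
next
  case (miss M'' )
  then show ?thesis using assms(2) by (metis gds_step.miss)
qed

lemma exec_transfer:
  assumes "gds_exec sz C rhoA cA ch hist M H L tot"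
  shows "(\<forall>q\<in>set hist. rhoA q = rhoB q \<and> 0 < cB q \<and> cA q \<le> e * cB q \<and> 0 \<le> cA q) \<Longrightarrow>
    \<exists>tot2. gds_exec sz C rhoB cB ch hist M H L tot2 \<and> tot \<le> e * tot2 \<and> 0 \<le> tot2
       \<and> (hist \<noteq> [] \<longrightarrow> 0 < tot2) \<and> (hist = [] \<longrightarrow> M = {} \<and> tot = 0 \<and> tot2 = 0)"
  using assms
proof (induction rule: gds_exec.induct)
  case init
  then show ?case by (auto intro: gds_exec.init)
next
  case (step hist M H L tot q M' H' L' paid)
  from step.prems have IHp: "\<forall>q\<in>set hist. rhoA q = rhoB q \<and> 0 < cB q \<and> cA q \<le> e * cB q \<and> 0 \<le> cA q"
    by auto
  from step.IH[OF IHp] obtain tot2 where t2: "gds_exec sz C rhoB cB ch hist M H L tot2"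
    "tot \<le> e * tot2" "0 \<le> tot2" "hist \<noteq> [] \<longrightarrow> 0 < tot2"
    "hist = [] \<longrightarrow> M = {} \<and> tot = 0 \<and> tot2 = 0" by blast
  have qp: "rhoA q = rhoB q" "0 < cB q" "cA q \<le> e * cB q" "0 \<le> cA q" using step.prems by auto
  from step_transfer[where rhoB=rhoB and cB=cB, OF step.hyps(2) qp(1)] obtain paid2 where
    p2: "gds_step sz C rhoB cB (ch hist) q M H L M' H' L' paid2"
    "(paid = 0 \<and> paid2 = 0 \<and> q \<in> M) \<or> (paid = cA q \<and> paid2 = cB q \<and> q \<notin> M)" by blast
  have ex: "gds_exec sz C rhoB cB ch (hist @ [q]) M' H' L' (tot2 + paid2)"
    using gds_exec.step[OF t2(1) p2(1)] .
  have pos: "0 < tot2 + paid2"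
  proof (cases "hist = []")
    case True
    then have "M = {}" using t2 by auto
    then show ?thesis using p2(2) qp t2 by auto
  next
    case False then show ?thesis using p2(2) qp t2 by auto
  qed
  have "tot + paid \<le> e * (tot2 + paid2)"
    using p2(2) qp t2(2) by (auto simp: algebra_simps)
  then show ?case using ex pos by auto
qed

lemma feasible_exists:
  assumes "\<forall>q. sz q \<le> C"
  shows "feasible_schedule sz C \<sigma> ({} # map (\<lambda>q. {q}) \<sigma>)"
  using assms unfolding feasible_schedule_def by auto

lemma OPT_nonneg:
  assumes "\<forall>q. sz q \<le> C" "\<forall>q. 0 \<le> c q"
  shows "0 \<le> OPT sz C c \<sigma>"
  unfolding OPT_def
proof (rule cInf_greatest)
  show "{schedule_cost c \<sigma> Ms |Ms. feasible_schedule sz C \<sigma> Ms} \<noteq> {}"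
    using feasible_exists[OF assms(1)] by blast
next
  fix x assume "x \<in> {schedule_cost c \<sigma> Ms |Ms. feasible_schedule sz C \<sigma> Ms}"
  then show "0 \<le> x" using assms(2) unfolding schedule_cost_def
    by (auto intro!: sum_nonneg)
qed

lemma OPT_mono:
  assumes "\<forall>q. sz q \<le> C" "\<forall>q. 0 \<le> cA q" "\<forall>q. cA q \<le> cB q"
  shows "OPT sz C cA \<sigma> \<le> OPT sz C cB \<sigma>"
  unfolding OPT_def
proof (rule cInf_greatest)
  show "{schedule_cost cB \<sigma> Ms |Ms. feasible_schedule sz C \<sigma> Ms} \<noteq> {}"
    using feasible_exists[OF assms(1)] by blast
next
  fix x assume "x \<in> {schedule_cost cB \<sigma> Ms |Ms. feasible_schedule sz C \<sigma> Ms}"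
  then obtain Ms where x: "x = schedule_cost cB \<sigma> Ms" "feasible_schedule sz C \<sigma> Ms" by blast
  have bdd: "bdd_below {schedule_cost cA \<sigma> Ms |Ms. feasible_schedule sz C \<sigma> Ms}"
    unfolding bdd_below_def using assms(2) unfolding schedule_cost_def
    by (auto intro!: exI[of _ 0] sum_nonneg)
  have "Inf {schedule_cost cA \<sigma> Ms |Ms. feasible_schedule sz C \<sigma> Ms} \<le> schedule_cost cA \<sigma> Ms"
    using x(2) bdd by (auto intro!: cInf_lower)
  also have "\<dots> \<le> x" unfolding x(1) schedule_cost_def
    using assms(3) by (auto intro!: sum_mono)
  finally show "Inf {schedule_cost cA \<sigma> Ms |Ms. feasible_schedule sz C \<sigma> Ms} \<le> x" .
qed

lemma top_bit_props:
  assumes "(1::nat) \<le> n"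
  shows "n < 2 ^ top_bit n" "1 \<le> top_bit n" "2 ^ (top_bit n - 1) \<le> n"
proof -
  have ex: "n < 2 ^ n" by simp
  show a: "n < 2 ^ top_bit n" unfolding top_bit_def by (rule LeastI[of _ n]) (rule ex)
  show b: "1 \<le> top_bit n"
  proof (rule ccontr)
    assume "\<not> 1 \<le> top_bit n" then have "top_bit n = 0" by simp
    then show False using a assms by simp
  qed
  have "\<not> n < 2 ^ (top_bit n - 1)"
  proof
    assume "n < 2 ^ (top_bit n - 1)"
    then have "top_bit n \<le> top_bit n - 1" unfolding top_bit_def by (rule Least_le)
    then show False using b by simp
  qed
  then show "2 ^ (top_bit n - 1) \<le> n" by simp
qed

lemma round_props_all:
  assumes "(1::nat) \<le> n" "1 \<le> p"
  shows "1 \<le> round_prec p n \<and> round_prec p n \<le> n \<and>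
    real n \<le> (1 + 2 powr (1 - real p)) * real (round_prec p n)"
proof -
  note tb = top_bit_props[OF assms(1)]
  define b where "b = top_bit n"
  have ge0: "0 \<le> 2 powr (1 - real p)" by simp
  show "1 \<le> round_prec p n \<and> round_prec p n \<le> n \<and>
    real n \<le> (1 + 2 powr (1 - real p)) * real (round_prec p n)"
  proof (cases "b \<le> p")
    case True
    then have rn: "round_prec p n = n" unfolding round_prec_def b_def by simp
    have "0 \<le> 2 powr (1 - real p) * real n" using ge0 by simp
    then show ?thesis using assms rn by (simp add: distrib_right)
  next
    case False
    define d where "d = b - p"
    define r where "r = (n div 2 ^ d) * 2 ^ d"
    have rp: "round_prec p n = r" unfolding round_prec_def r_def d_def b_def using False b_def by auto
    have bd: "b - 1 = (p - 1) + d" using False assms(2) unfolding d_def by simp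
    have "2 ^ (p-1) * 2 ^ d \<le> n" using tb(3) bd unfolding b_def by (simp add: power_add)
    then have q1: "2 ^ (p-1) \<le> n div 2 ^ d"
      by (simp add: less_eq_div_iff_mult_less_eq)
    have rle: "r \<le> n" unfolding r_def by (metis div_mult_mod_eq le_add1)
    have nlt: "n < r + 2 ^ d" unfolding r_def
      by (metis add.commute div_mult_mod_eq mod_less_divisor nat_add_left_cancel_less zero_less_numeral zero_less_power)
    have rge: "2 ^ (p-1) * 2 ^ d \<le> r" unfolding r_def using q1 by simp
    have r1: "1 \<le> r" by (rule order_trans[OF _ rge]) simp
    have "real (2 ^ d) \<le> 2 powr (1 - real p) * real r"
    proof -
      have h1: "real (2 ^ (p-1) * 2 ^ d) \<le> real r" using rge by (simp only: of_nat_le_iff)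
      have h2: "real p - 1 = real (p - 1)" using assms(2) by (simp add: of_nat_diff)
      have h3: "2 powr real (p - 1) = (2::real) ^ (p - 1)" by (rule powr_realpow) simp
      have h4: "2 powr (real p - 1) = (2::real) ^ (p - 1)" by (subst h2) (rule h3)
      have h5: "real (2 ^ (p-1) * 2 ^ d) = (2::real) ^ (p - 1) * 2 ^ d" by simp
      have "2 powr (real p - 1) * 2 ^ d \<le> real r" using h1 unfolding h4 h5 .
      then have "2 powr (1 - real p) * (2 powr (real p - 1) * 2 ^ d) \<le> 2 powr (1 - real p) * real r"
        by (simp add: mult_left_mono)
      moreover have "2 powr (1 - real p) * 2 powr (real p - 1) = 1"
        by (simp add: powr_add[symmetric])
      ultimately show ?thesis by (simp add: mult.assoc[symmetric])
    qed
    moreover have "real n \<le> real r + real (2 ^ d)" using nlt by linarith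
    ultimately have "real n \<le> (1 + 2 powr (1 - real p)) * real r" by (simp add: algebra_simps)
    then show ?thesis using rp rle r1 by simp
  qed
qed

lemma round_props:
  assumes "(1::nat) \<le> n" "1 \<le> p"
  shows "1 \<le> round_prec p n" "round_prec p n \<le> n"
    "real n \<le> (1 + 2 powr (1 - real p)) * real (round_prec p n)"
  using round_props_all[OF assms] by blast+

lemma cprime_props:
  assumes "0 < sz q" "0 < c q" "1 \<le> p"
  defines "c' \<equiv> (if int_ratio sz c q then sz q * rounded_ratio p sz c q else c q)"
  shows "0 < c' \<and> c' \<le> c q \<and> (int_ratio sz c q \<longrightarrow>
     c' / sz q = rounded_ratio p sz c q \<and> (\<exists>n::nat. n > 0 \<and> c' / sz q = real n)
     \<and> c q \<le> (1 + 2 powr (1 - real p)) * c')"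
proof (cases "int_ratio sz c q")
  case False then show ?thesis using assms by simp
next
  case True
  then obtain n :: nat where n: "n > 0" "c q / sz q = real n" unfolding int_ratio_def by blast
  have rr: "rounded_ratio p sz c q = real (round_prec p n)"
    unfolding rounded_ratio_def n(2) by simp
  note rp = round_props[of n p]
  have n1: "1 \<le> n" using n by simp
  have cq: "c q = sz q * real n" using n(2) assms(1) by (simp add: field_simps)
  have c': "c' = sz q * real (round_prec p n)" unfolding c'_def using True rr by simp
  have "0 < c'" using c' rp(1)[OF n1 assms(3)] assms(1) by simp
  moreover have "c' \<le> c q" unfolding c' cq using rp(2)[OF n1 assms(3)] assms(1) by simp
  moreover have "c' / sz q = rounded_ratio p sz c q" unfolding c' rr using assms(1) by simp
  moreover have "\<exists>m::nat. m > 0 \<and> c' / sz q = real m"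
    using c' rp(1)[OF n1 assms(3)] assms(1) by (intro exI[of _ "round_prec p n"]) auto
  moreover have "c q \<le> (1 + 2 powr (1 - real p)) * c'"
  proof -
    have "sz q * real n \<le> sz q * ((1 + 2 powr (1 - real p)) * real (round_prec p n))"
      using rp(3)[OF n1 assms(3)] assms(1) by (simp add: mult_left_mono)
    then show ?thesis unfolding cq c' by (simp add: algebra_simps)
  qed
  ultimately show ?thesis using True by blast
qed

theorem mainTheorem3:
  fixes sz :: "'q \<Rightarrow> real" and C :: real and c :: "'q \<Rightarrow> real"
    and p :: nat and k :: real and \<sigma> :: "'q list" and tot :: real
  assumes size_pos: "\<forall>q. 0 < sz q"
    and fits: "\<forall>q. sz q \<le> C"
    and cost_pos: "\<forall>q. 0 < c q"
    and p_pos: "1 \<le> p"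
    and competitive:
      "\<forall>c' (\<tau> :: 'q list) ch t.
         (\<forall>q. 0 < c' q) \<longrightarrow> (\<forall>q \<in> set \<tau>. int_ratio sz c' q) \<longrightarrow>
         (\<forall>hist M H r. ch hist M H r \<longrightarrow> min_H M H r) \<longrightarrow>
         GDS_run_cost sz C c' ch \<tau> t \<longrightarrow> t \<le> k * OPT sz C c' \<tau>"
    and sigma_int: "\<forall>q \<in> set \<sigma>. int_ratio sz c q"
    and camp: "CAMP_run_cost p sz C c \<sigma> tot"
  shows "tot \<le> (1 + 2 powr (1 - real p)) * k * OPT sz C c \<sigma>"
proof -
  define e where "e = 1 + 2 powr (1 - real p)"
  have e0: "0 \<le> e" unfolding e_def by (simp add: add_nonneg_nonneg)
  define c' where "c' = (\<lambda>q. if int_ratio sz c q then sz q * rounded_ratio p sz c q else c q)"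
  have cp: "\<And>q. 0 < c' q \<and> c' q \<le> c q \<and> (int_ratio sz c q \<longrightarrow>
     c' q / sz q = rounded_ratio p sz c q \<and> (\<exists>n::nat. n > 0 \<and> c' q / sz q = real n)
     \<and> c q \<le> e * c' q)"
  proof -
    fix q
    have a: "0 < sz q" "0 < c q" using size_pos cost_pos by auto
    show "?thesis q" unfolding c'_def e_def by (rule cprime_props[where sz=sz and q=q and c=c and p=p, OF a p_pos])
  qed
  from camp obtain M H L where ex: "gds_exec sz C (rounded_ratio p sz c) c lru_tie \<sigma> M H L tot"
    unfolding CAMP_run_cost_def by blast
  have pre: "\<forall>q\<in>set \<sigma>. rounded_ratio p sz c q = c' q / sz q \<and> 0 < c' q \<and> c q \<le> e * c' q \<and> 0 \<le> c q"
    using cp sigma_int cost_pos by (metis less_imp_le)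
  from exec_transfer[where rhoB="\<lambda>q. c' q / sz q" and cB=c' and e=e, OF ex pre]
  obtain tot2 where t2: "gds_exec sz C (\<lambda>q. c' q / sz q) c' lru_tie \<sigma> M H L tot2"
    "tot \<le> e * tot2" "0 \<le> tot2" "\<sigma> \<noteq> [] \<longrightarrow> 0 < tot2" "\<sigma> = [] \<longrightarrow> M = {} \<and> tot = 0 \<and> tot2 = 0"
    by blast
  have comp: "tot2 \<le> k * OPT sz C c' \<sigma>"
  proof -
    have "\<forall>q. 0 < c' q" using cp by blast
    moreover have "\<forall>q\<in>set \<sigma>. int_ratio sz c' q" using cp sigma_int unfolding int_ratio_def by blast
    moreover have "\<forall>hist M H r. lru_tie hist M H r \<longrightarrow> min_H M H r" unfolding lru_tie_def by blast
    moreover have "GDS_run_cost sz C c' lru_tie \<sigma> tot2" unfolding GDS_run_cost_def using t2(1) by blast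
    ultimately show ?thesis using competitive by blast
  qed
  have o1: "0 \<le> OPT sz C c' \<sigma>" using OPT_nonneg[of sz C c'] fits cp by (meson less_imp_le)
  have o2: "OPT sz C c' \<sigma> \<le> OPT sz C c \<sigma>" using OPT_mono[of sz C c' c] fits cp by (meson less_imp_le)
  show ?thesis
  proof (cases "0 \<le> k")
    case True
    have "tot \<le> e * tot2" by (rule t2(2))
    also have "\<dots> \<le> e * (k * OPT sz C c' \<sigma>)" using comp e0 by (simp add: mult_left_mono)
    also have "\<dots> \<le> e * (k * OPT sz C c \<sigma>)" using o2 True e0 by (simp add: mult_left_mono)
    finally show ?thesis unfolding e_def by (simp add: mult.assoc)
  next
    case False
    have "k * OPT sz C c' \<sigma> \<le> 0" using False o1 by (simp add: mult_nonpos_nonneg)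
    then have "\<sigma> = []" using comp t2(4) by force
    then have tz: "tot = 0" using t2(5) by blast
    have "OPT sz C c \<sigma> = 0"
    proof -
      have "{schedule_cost c \<sigma> Ms |Ms. feasible_schedule sz C \<sigma> Ms} = {0}"
        using feasible_exists[OF fits, of \<sigma>] \<open>\<sigma> = []\<close> unfolding schedule_cost_def by auto
      then show ?thesis unfolding OPT_def by simp
    qed
    then show ?thesis using tz by simp
  qed
qed

end
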